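(* If $H$ is a non-complete graph that has a universal vertex (a vertex adjacent to all other vertices), then $H$ is not an $\operatorname{IR}$-graph.
   Context: All graphs are finite and simple. For $G=(V,E)$, $D\subseteq V$, $v\in D$: $\operatorname{PN}(v,D)=N[v]-N[D-\{v\}]$ (closed neighbourhoods). $D$ is irredundant if $\operatorname{PN}(v,D)\neq\varnothing$ for all $v\in D$; $\operatorname{IR}(G)$ is the maximum size of an irredundant set; an $\operatorname{IR}(G)$-set is an irredundant set of that size. $G(\operatorname{IR})$ has the $\operatorname{IR}(G)$-sets as vertices, with $D\sim D'$ iff there exist $u\in D$, $v\in D'$ with $uv\in E(G)$ and $D'=(D-\{u\})\cup\{v\}$. A graph $H$ is an $\operatorname{IR}$-graph if $H\cong G(\operatorname{IR})$ for some graph $G$. *)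

theory Defs
  imports Main
begin

definition simple_graph :: "'a set \<Rightarrow> ('a \<Rightarrow> 'a \<Rightarrow> bool) \<Rightarrow> bool" where
  "simple_graph V E \<longleftrightarrow> finite V \<and> (\<forall>u v. E u v \<longrightarrow> u \<in> V \<and> v \<in> V)
     \<and> (\<forall>u v. E u v \<longrightarrow> E v u) \<and> (\<forall>v. \<not> E v v)"

definition complete_graph :: "'a set \<Rightarrow> ('a \<Rightarrow> 'a \<Rightarrow> bool) \<Rightarrow> bool" where
  "complete_graph V E \<longleftrightarrow> (\<forall>u\<in>V. \<forall>v\<in>V. u \<noteq> v \<longrightarrow> E u v)"

definition universal_vertex :: "'a set \<Rightarrow> ('a \<Rightarrow> 'a \<Rightarrow> bool) \<Rightarrow> 'a \<Rightarrow> bool" where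
  "universal_vertex V E w \<longleftrightarrow> w \<in> V \<and> (\<forall>x\<in>V. x \<noteq> w \<longrightarrow> E w x)"

definition cnbhd :: "'a set \<Rightarrow> ('a \<Rightarrow> 'a \<Rightarrow> bool) \<Rightarrow> 'a \<Rightarrow> 'a set" where
  "cnbhd V E v = {u \<in> V. u = v \<or> E v u}"

definition cnbhd_set :: "'a set \<Rightarrow> ('a \<Rightarrow> 'a \<Rightarrow> bool) \<Rightarrow> 'a set \<Rightarrow> 'a set" where
  "cnbhd_set V E D = (\<Union>v\<in>D. cnbhd V E v)"

definition PN :: "'a set \<Rightarrow> ('a \<Rightarrow> 'a \<Rightarrow> bool) \<Rightarrow> 'a \<Rightarrow> 'a set \<Rightarrow> 'a set" where
  "PN V E v D = cnbhd V E v - cnbhd_set V E (D - {v})"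

definition irredundant :: "'a set \<Rightarrow> ('a \<Rightarrow> 'a \<Rightarrow> bool) \<Rightarrow> 'a set \<Rightarrow> bool" where
  "irredundant V E D \<longleftrightarrow> D \<subseteq> V \<and> (\<forall>v\<in>D. PN V E v D \<noteq> {})"

definition IR :: "'a set \<Rightarrow> ('a \<Rightarrow> 'a \<Rightarrow> bool) \<Rightarrow> nat" where
  "IR V E = Max (card ` {D. irredundant V E D})"

definition IR_sets :: "'a set \<Rightarrow> ('a \<Rightarrow> 'a \<Rightarrow> bool) \<Rightarrow> 'a set set" where
  "IR_sets V E = {D. irredundant V E D \<and> card D = IR V E}"

definition IR_adj :: "'a set \<Rightarrow> ('a \<Rightarrow> 'a \<Rightarrow> bool) \<Rightarrow> 'a set \<Rightarrow> 'a set \<Rightarrow> bool" where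
  "IR_adj V E D D' \<longleftrightarrow> D \<in> IR_sets V E \<and> D' \<in> IR_sets V E \<and>
     (\<exists>u\<in>D. \<exists>v\<in>D'. E u v \<and> D' = (D - {u}) \<union> {v})"

definition graph_iso :: "'a set \<Rightarrow> ('a \<Rightarrow> 'a \<Rightarrow> bool) \<Rightarrow> 'b set \<Rightarrow> ('b \<Rightarrow> 'b \<Rightarrow> bool) \<Rightarrow> bool" where
  "graph_iso V1 E1 V2 E2 \<longleftrightarrow> (\<exists>f. bij_betw f V1 V2 \<and>
     (\<forall>u\<in>V1. \<forall>v\<in>V1. E1 u v \<longleftrightarrow> E2 (f u) (f v)))"

definition IR_graph_over :: "'b itself \<Rightarrow> 'a set \<Rightarrow> ('a \<Rightarrow> 'a \<Rightarrow> bool) \<Rightarrow> bool" where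
  "IR_graph_over _ VH EH \<longleftrightarrow> (\<exists>(VG :: 'b set) EG. simple_graph VG EG \<and>
     graph_iso VH EH (IR_sets VG EG) (IR_adj VG EG))"

end

theory Submission
  imports Defs
begin

lemma PN_mem:
  "p \<in> PN V E v D \<longleftrightarrow> p \<in> V \<and> (p = v \<or> E v p) \<and> (\<forall>d\<in>D. d \<noteq> v \<longrightarrow> \<not> (p = d \<or> E d p))"
  unfolding PN_def cnbhd_set_def cnbhd_def by auto

lemma irr_intro:
  assumes "W \<subseteq> V"
    and "\<And>w. w \<in> W \<Longrightarrow> \<exists>p. p \<in> V \<and> (p = w \<or> E w p) \<and> (\<forall>a\<in>W. a \<noteq> w \<longrightarrow> \<not> (p = a \<or> E a p))"
  shows "irredundant V E W"
  unfolding irredundant_def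
proof (intro conjI ballI)
  show "W \<subseteq> V" by fact
  fix w assume "w \<in> W"
  then obtain p where "p \<in> V \<and> (p = w \<or> E w p) \<and> (\<forall>a\<in>W. a \<noteq> w \<longrightarrow> \<not> (p = a \<or> E a p))"
    using assms(2) by blast
  hence "p \<in> PN V E w W" by (simp add: PN_mem)
  thus "PN V E w W \<noteq> {}" by blast
qed

lemma indep_irr:
  assumes "W \<subseteq> V" and "\<forall>a\<in>W. \<forall>b\<in>W. a \<noteq> b \<longrightarrow> \<not> E a b"
  shows "irredundant V E W"
  using assms by (intro irr_intro) (auto)

lemma IR_max:
  assumes "simple_graph V E" "irredundant V E D"
  shows "card D \<le> IR V E"
proof -
  have fin: "finite V" using assms(1) by (simp add: simple_graph_def)
  have "{D. irredundant V E D} \<subseteq> Pow V" by (auto simp: irredundant_def)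
  hence "finite {D. irredundant V E D}" using fin by (meson finite_Pow_iff finite_subset)
  thus ?thesis unfolding IR_def using assms(2) by (intro Max_ge) auto
qed

lemma dual:
  assumes sg: "simple_graph V E" and irr: "irredundant V E D"
    and f: "\<And>d. d \<in> D \<Longrightarrow> f d \<in> PN V E d D"
  shows "irredundant V E (f ` D) \<and> inj_on f D"
proof -
  have sym: "\<And>a b. E a b \<Longrightarrow> E b a" using sg by (simp add: simple_graph_def)
  have DV: "D \<subseteq> V" using irr by (simp add: irredundant_def)
  have fd: "\<And>d. d \<in> D \<Longrightarrow> f d \<in> V \<and> (f d = d \<or> E d (f d)) \<and> (\<forall>a\<in>D. a \<noteq> d \<longrightarrow> \<not> (f d = a \<or> E a (f d)))"
    using f by (simp add: PN_mem)
  have inj: "inj_on f D"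
  proof (rule inj_onI, rule ccontr)
    fix a b assume ab: "a \<in> D" "b \<in> D" "f a = f b" "a \<noteq> b"
    then show False using fd[of a] fd[of b] by metis
  qed
  have "irredundant V E (f ` D)"
  proof (rule irr_intro)
    show "f ` D \<subseteq> V" using fd by blast
    fix w assume "w \<in> f ` D"
    then obtain d where d: "d \<in> D" "w = f d" by blast
    show "\<exists>p. p \<in> V \<and> (p = w \<or> E w p) \<and> (\<forall>a\<in>f ` D. a \<noteq> w \<longrightarrow> \<not> (p = a \<or> E a p))"
    proof (intro exI conjI ballI impI)
      show "d \<in> V" using d DV by blast
      show "d = w \<or> E w d" using fd[OF d(1)] d(2) sym by metis
      fix a assume a: "a \<in> f ` D" "a \<noteq> w"
      then obtain d' where d': "d' \<in> D" "a = f d'" by blast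
      hence "d' \<noteq> d" using a d by blast
      thus "\<not> (d = a \<or> E a d)" using fd[OF d'(1)] d d' sym by metis
    qed
  qed
  thus ?thesis using inj by blast
qed

lemma card_swap2:
  assumes "finite X" "a \<in> X" "b \<in> X" "a \<noteq> b" "p \<notin> X" "q \<notin> X" "p \<noteq> q"
  shows "card ((X - {a, b}) \<union> {p, q}) = card X"
proof -
  have "card (X - {a, b}) = card X - 2" using assms by (simp add: card_Diff_subset)
  moreover have "card X \<ge> 2"
  proof -
    have "{a, b} \<subseteq> X" using assms by auto
    hence "card {a, b} \<le> card X" using assms(1) card_mono by blast
    thus ?thesis using assms(4) by simp
  qed
  moreover have "(X - {a, b}) \<union> {p, q} = insert p (insert q (X - {a, b}))" by auto
  ultimately show ?thesis using assms by simp
qed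

lemma card_add2:
  assumes "finite X" "a \<in> X" "p \<notin> X" "q \<notin> X" "p \<noteq> q"
  shows "card ((X - {a}) \<union> {p, q}) = card X + 1"
proof -
  have "card (X - {a}) = card X - 1" using assms by simp
  moreover have "card X \<ge> 1" using assms card_0_eq by fastforce
  moreover have "(X - {a}) \<union> {p, q} = insert p (insert q (X - {a}))" by auto
  ultimately show ?thesis using assms by simp
qed

locale UV =
  fixes V :: "'b set" and E :: "'b \<Rightarrow> 'b \<Rightarrow> bool" and X :: "'b set"
  assumes sg: "simple_graph V E" and XI: "X \<in> IR_sets V E"
    and uni: "\<And>W. W \<in> IR_sets V E \<Longrightarrow> W \<noteq> X \<Longrightarrow> IR_adj V E X W"
begin

lemma sym: "E a b \<Longrightarrow> E b a" using sg by (simp add: simple_graph_def)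
lemma irrE: "\<not> E a a" using sg by (simp add: simple_graph_def)
lemma inV: "E a b \<Longrightarrow> a \<in> V \<and> b \<in> V" using sg by (simp add: simple_graph_def)
lemma finV: "finite V" using sg by (simp add: simple_graph_def)
lemma XV: "X \<subseteq> V" using XI by (auto simp: IR_sets_def irredundant_def)
lemma Xcard: "card X = IR V E" using XI by (auto simp: IR_sets_def)
lemma finX: "finite X" using XV finV finite_subset by blast

lemma far:
  assumes "irredundant V E W" "card W \<ge> card X" "p \<in> W" "q \<in> W" "p \<notin> X" "q \<notin> X" "p \<noteq> q"
  shows False
proof -
  have "card W \<le> IR V E" using IR_max[OF sg assms(1)] .
  hence "W \<in> IR_sets V E" using assms(1,2) Xcard by (simp add: IR_sets_def)
  moreover have "W \<noteq> X" using assms(3,5) by auto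
  ultimately have "IR_adj V E X W" using uni by blast
  then obtain u v where "W = (X - {u}) \<union> {v}" unfolding IR_adj_def by blast
  thus False using assms(3-7) by auto
qed

lemma far_dual:
  assumes "irredundant V E Y" "card Y = card X" "a \<in> Y" "b \<in> Y" "a \<noteq> b"
    "pa \<in> PN V E a Y" "pb \<in> PN V E b Y" "pa \<notin> X" "pb \<notin> X"
  shows False
proof -
  define f where "f = (\<lambda>d. if d = a then pa else if d = b then pb else (SOME p. p \<in> PN V E d Y))"
  have f: "f d \<in> PN V E d Y" if "d \<in> Y" for d
  proof -
    have "PN V E d Y \<noteq> {}" using assms(1) that by (simp add: irredundant_def)
    hence "(SOME p. p \<in> PN V E d Y) \<in> PN V E d Y" by (simp add: some_in_eq)
    thus ?thesis using assms(6,7) by (simp add: f_def)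
  qed
  have d: "irredundant V E (f ` Y) \<and> inj_on f Y" using dual[OF sg assms(1)] f by blast
  have fa: "f a = pa" and fb: "f b = pb" using assms(5) by (auto simp: f_def)
  have "card (f ` Y) = card Y" using d card_image by blast
  moreover have "pa \<in> f ` Y" "pb \<in> f ` Y" using assms(3,4) fa fb by (auto intro!: image_eqI)
  moreover have "pa \<noteq> pb" using d assms(3,4,5) fa fb by (metis inj_onD)
  ultimately show False using far[of "f ` Y" pa pb] d assms by auto
qed

lemma adj_form:
  assumes "IR_adj V E X Y"
  shows "\<exists>x y. x \<in> X \<and> y \<notin> X \<and> E x y \<and> Y = (X - {x}) \<union> {y}"
proof -
  obtain x y where xy: "x \<in> X" "y \<in> Y" "E x y" "Y = (X - {x}) \<union> {y}" and YI: "Y \<in> IR_sets V E"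
    using assms unfolding IR_adj_def by blast
  have "y \<notin> X"
  proof
    assume yX: "y \<in> X"
    have "y \<noteq> x" using xy(3) irrE by blast
    hence "Y = X - {x}" using xy yX by auto
    hence "card Y = card X - 1" using xy(1) finX by simp
    moreover have "card Y = card X" using YI Xcard by (simp add: IR_sets_def)
    moreover have "card X \<ge> 1" using xy(1) finX card_0_eq by fastforce
    ultimately show False by simp
  qed
  thus ?thesis using xy by blast
qed

lemma typeB:
  assumes YI: "Y \<in> IR_sets V E" and x: "x \<in> X" and y: "y \<notin> X" and exy: "E x y"
    and Yeq: "Y = (X - {x}) \<union> {y}"
  shows "\<forall>r\<in>X - {x}. \<not> E y r" and "\<forall>r\<in>X - {x}. \<forall>z\<in>Y. z \<noteq> r \<longrightarrow> \<not> E r z"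
proof -
  have Yirr: "irredundant V E Y" and Ycard: "card Y = card X"
    using YI Xcard by (auto simp: IR_sets_def)
  have yY: "y \<in> Y" using Yeq by auto
  have notX: "d \<notin> X" if r: "r \<in> X - {x}" and d: "d \<in> PN V E r Y" and dr: "d \<noteq> r" for r d
  proof
    assume dX: "d \<in> X"
    have dall: "\<forall>a\<in>Y. a \<noteq> r \<longrightarrow> \<not> (d = a \<or> E a d)" using d by (simp add: PN_mem)
    show False
    proof (cases "d = x")
      case True
      have "y \<noteq> r" using r y by auto
      thus False using dall yY True exy sym by blast
    next
      case False
      hence "d \<in> Y" using dX Yeq by auto
      thus False using dall dr by blast
    qed
  qed
  have one: "\<forall>r\<in>X - {x}. \<not> E y r"
  proof (rule ccontr)
    assume "\<not> (\<forall>r\<in>X - {x}. \<not> E y r)"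
    then obtain t where t: "t \<in> X" "t \<noteq> x" "E y t" by auto
    have tY: "t \<in> Y" using Yeq t by auto
    obtain c where c: "c \<in> PN V E t Y" using Yirr tY unfolding irredundant_def by blast
    have yt: "y \<noteq> t" using y t by auto
    have call: "\<forall>a\<in>Y. a \<noteq> t \<longrightarrow> \<not> (c = a \<or> E a c)" and cV: "c \<in> V" using c by (auto simp: PN_mem)
    have ct: "c \<noteq> t" using call yY yt t(3) by blast
    have cX: "c \<notin> X" using notX c ct t by auto
    have cy: "c \<noteq> y" "\<not> E y c" using call yY yt by auto
    have iso: "\<forall>r\<in>X - {x, t}. \<forall>z\<in>Y. z \<noteq> r \<longrightarrow> \<not> E r z"
    proof (intro ballI impI notI)
      fix r z assume r: "r \<in> X - {x,t}" and z: "z \<in> Y" "z \<noteq> r" and rz: "E r z"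
      have rY: "r \<in> Y" using r Yeq by auto
      obtain d where d: "d \<in> PN V E r Y" using Yirr rY unfolding irredundant_def by blast
      have "\<forall>a\<in>Y. a \<noteq> r \<longrightarrow> \<not> (d = a \<or> E a d)" using d by (simp add: PN_mem)
      hence "d \<noteq> r" using z rz sym by blast
      hence "d \<notin> X" using notX d r by auto
      moreover have "t \<noteq> r" using r by auto
      ultimately show False using far_dual[OF Yirr Ycard tY rY _ c d cX] by blast
    qed
    define W where "W = (X - {x, t}) \<union> {y, c}"
    have WV: "W \<subseteq> V" using XV cV inV[OF exy] by (auto simp: W_def)
    have isoR: "\<not> E r z" if "r \<in> X - {x, t}" "z \<in> Y" "z \<noteq> r" for r z
      using iso that by blast
    have cR: "\<not> E a c" if "a \<in> Y" "a \<noteq> t" for a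
      using call that by blast
    have ycX: "y \<notin> X - {x, t}" "c \<notin> X - {x, t}" using y cX by auto
    have XY: "X - {x, t} \<subseteq> Y" using Yeq by auto
    have tXt: "t \<notin> X - {x, t}" by simp
    have ind: "\<forall>a\<in>W. \<forall>b\<in>W. a \<noteq> b \<longrightarrow> \<not> E a b"
    proof (intro ballI impI notI)
      fix a b assume a: "a \<in> W" and b: "b \<in> W" and ab: "a \<noteq> b" and eab: "E a b"
      have eba: "E b a" using eab sym by blast
      have key: False if a': "a' \<in> X - {x, t}" and b': "b' \<in> W" "a' \<noteq> b'" and e: "E a' b'" for a' b'
      proof -
        have a'Y: "a' \<in> Y" using a' XY by blast
        have a't: "a' \<noteq> t" using a' by blast
        consider "b' \<in> X - {x, t}" | "b' = y" | "b' = c" using b' unfolding W_def by blast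
        thus False
        proof cases
          case 1 thus False using isoR[OF a' _ b'(2)[symmetric]] XY e by blast
        next
          case 2 thus False using isoR[OF a' yY] e ycX(1) a' by blast
        next
          case 3 thus False using cR[OF a'Y a't] e by simp
        qed
      qed
      consider "a \<in> X - {x, t}" | "b \<in> X - {x, t}" | "a \<notin> X - {x, t}" "b \<notin> X - {x, t}" by blast
      thus False
      proof cases
        case 1 thus False using key[OF _ b ab eab] by blast
      next
        case 2 thus False using key[OF _ a ab[symmetric] eba] by blast
      next
        case 3
        hence "a = y \<or> a = c" "b = y \<or> b = c" using a b unfolding W_def by auto
        thus False using ab eab eba cy by blast
      qed
    qed
    have "irredundant V E W" using indep_irr[OF WV ind] .
    moreover have "card W = card X" unfolding W_def
      using card_swap2[OF finX x t(1) t(2)[symmetric] y cX cy(1)[symmetric]] .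
    ultimately show False using far[of W y c] y cX cy by (auto simp: W_def)
  qed
  show "\<forall>r\<in>X - {x}. \<not> E y r" by (rule one)
  show "\<forall>r\<in>X - {x}. \<forall>z\<in>Y. z \<noteq> r \<longrightarrow> \<not> E r z"
  proof (intro ballI impI notI)
    fix r z assume r: "r \<in> X - {x}" and z: "z \<in> Y" "z \<noteq> r" and rz: "E r z"
    have rY: "r \<in> Y" using r Yeq by auto
    obtain d where d: "d \<in> PN V E r Y" using Yirr rY unfolding irredundant_def by blast
    have "\<forall>a\<in>Y. a \<noteq> r \<longrightarrow> \<not> (d = a \<or> E a d)" using d by (simp add: PN_mem)
    hence dr: "d \<noteq> r" using z rz sym by blast
    hence dX: "d \<notin> X" using notX d r by auto
    have yr: "y \<noteq> r" using r y by auto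
    have yP: "y \<in> PN V E y Y"
    proof -
      have "\<forall>a\<in>Y. a \<noteq> y \<longrightarrow> \<not> (y = a \<or> E a y)"
      proof (intro ballI impI)
        fix a assume "a \<in> Y" "a \<noteq> y"
        hence "a \<in> X - {x}" using Yeq by auto
        thus "\<not> (y = a \<or> E a y)" using one y sym by blast
      qed
      thus ?thesis using inV[OF exy] by (simp add: PN_mem)
    qed
    show False using far_dual[OF Yirr Ycard yY rY yr yP d y dX] .
  qed
qed

lemma main:
  assumes YI: "Y \<in> IR_sets V E" and ZI: "Z \<in> IR_sets V E" and YZ: "Y \<noteq> Z"
    and aY: "IR_adj V E X Y" and aZ: "IR_adj V E X Z" and nYZ: "\<not> IR_adj V E Y Z"
  shows False
proof -
  obtain x1 y1 where Y: "x1 \<in> X" "y1 \<notin> X" "E x1 y1" "Y = (X - {x1}) \<union> {y1}"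
    using adj_form[OF aY] by blast
  obtain x2 y2 where Z: "x2 \<in> X" "y2 \<notin> X" "E x2 y2" "Z = (X - {x2}) \<union> {y2}"
    using adj_form[OF aZ] by blast
  have Y1: "\<And>r. r \<in> X - {x1} \<Longrightarrow> \<not> E y1 r" using typeB(1)[OF YI Y] by blast
  have Y2: "\<And>r z. r \<in> X - {x1} \<Longrightarrow> z \<in> Y \<Longrightarrow> z \<noteq> r \<Longrightarrow> \<not> E r z"
    using typeB(2)[OF YI Y] by blast
  have Z1: "\<And>r. r \<in> X - {x2} \<Longrightarrow> \<not> E y2 r" using typeB(1)[OF ZI Z] by blast
  have Z2: "\<And>r z. r \<in> X - {x2} \<Longrightarrow> z \<in> Z \<Longrightarrow> z \<noteq> r \<Longrightarrow> \<not> E r z"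
    using typeB(2)[OF ZI Z] by blast
  have y1V: "y1 \<in> V" and y2V: "y2 \<in> V" using inV Y(3) Z(3) by auto
  show False
  proof (cases "x1 = x2")
    case True
    have y12: "y1 \<noteq> y2" using True Y Z YZ by auto
    have ne: "\<not> E y1 y2"
    proof
      assume e: "E y1 y2"
      have "Z = (Y - {y1}) \<union> {y2}" using Y Z True by auto
      moreover have "y1 \<in> Y" "y2 \<in> Z" using Y(4) Z(4) by auto
      ultimately have "IR_adj V E Y Z" using YI ZI e unfolding IR_adj_def by blast
      thus False using nYZ by blast
    qed
    define W where "W = (X - {x1}) \<union> {y1, y2}"
    have WV: "W \<subseteq> V" using XV y1V y2V by (auto simp: W_def)
    have XY: "X - {x1} \<subseteq> Y" using Y(4) by auto
    have key: False if a': "a' \<in> X - {x1}" and b': "b' \<in> W" "a' \<noteq> b'" and e: "E a' b'" for a' b'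
    proof -
      consider "b' \<in> X - {x1}" | "b' = y1" | "b' = y2" using b' unfolding W_def by blast
      thus False
      proof cases
        case 1
        hence "b' \<in> Y" using XY by blast
        thus False using Y2[OF a' _ b'(2)[symmetric]] e by blast
      next
        case 2 thus False using Y1[OF a'] e sym by blast
      next
        case 3
        have "a' \<in> X - {x2}" using a' True by simp
        thus False using Z1 3 e sym by blast
      qed
    qed
    have ind: "\<forall>a\<in>W. \<forall>b\<in>W. a \<noteq> b \<longrightarrow> \<not> E a b"
    proof (intro ballI impI notI)
      fix a b assume a: "a \<in> W" and b: "b \<in> W" and ab: "a \<noteq> b" and eab: "E a b"
      have eba: "E b a" using eab sym by blast
      consider "a \<in> X - {x1}" | "b \<in> X - {x1}" | "a \<notin> X - {x1}" "b \<notin> X - {x1}" by blast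
      thus False
      proof cases
        case 1 thus False using key[OF _ b ab eab] by blast
      next
        case 2 thus False using key[OF _ a ab[symmetric] eba] by blast
      next
        case 3
        hence "a = y1 \<or> a = y2" "b = y1 \<or> b = y2" using a b unfolding W_def by auto
        thus False using ab eab eba ne by blast
      qed
    qed
    have "irredundant V E W" using indep_irr[OF WV ind] .
    hence "card W \<le> card X" using IR_max[OF sg] Xcard by simp
    moreover have "card W = card X + 1" unfolding W_def
      using card_add2[OF finX Y(1) Y(2) Z(2) y12] .
    ultimately show False by simp
  next
    case x12: False
    show False
    proof (cases "y1 = y2")
      case True
      have "x2 \<in> X - {x1}" using Z(1) x12 by auto
      hence "\<not> E y1 x2" using Y1 by blast
      thus False using Z(3) True sym by blast
    next
      case y12: False
      define W where "W = (X - {x1, x2}) \<union> {y1, y2}"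
      have WV: "W \<subseteq> V" using XV y1V y2V by (auto simp: W_def)
      have x1Z: "x1 \<in> X - {x2}" and x2Y: "x2 \<in> X - {x1}" using x12 Y(1) Z(1) by auto
      have x1Zm: "x1 \<in> Z" using x1Z Z(4) by auto
      have x2Ym: "x2 \<in> Y" using x2Y Y(4) by auto
      have "irredundant V E W"
      proof (rule irr_intro[OF WV])
        fix w assume w: "w \<in> W"
        show "\<exists>p. p \<in> V \<and> (p = w \<or> E w p) \<and> (\<forall>a\<in>W. a \<noteq> w \<longrightarrow> \<not> (p = a \<or> E a p))"
        proof (cases "w \<in> X - {x1, x2}")
          case True
          have wY: "w \<in> Y" using True Y(4) by auto
          have w1: "w \<in> X - {x1}" and w2: "w \<in> X - {x2}" using True by auto
          show ?thesis
          proof (intro exI conjI ballI impI)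
            show "w \<in> V" using True XV by blast
            show "w = w \<or> E w w" by simp
            fix a assume a: "a \<in> W" "a \<noteq> w"
            show "\<not> (w = a \<or> E a w)"
            proof (cases "a \<in> X - {x1, x2}")
              case True
              hence "a \<in> X - {x1}" by auto
              thus ?thesis using Y2[OF _ wY] a(2) by blast
            next
              case False
              hence "a = y1 \<or> a = y2" using a W_def by auto
              thus ?thesis using Y1[OF w1] Z1[OF w2] a(2) by blast
            qed
          qed
        next
          case False
          hence w2: "w = y1 \<or> w = y2" using w W_def by auto
          show ?thesis
          proof (cases "w = y1")
            case True
            show ?thesis
            proof (intro exI[of _ x1] conjI ballI impI)
              show "x1 \<in> V" using Y(1) XV by blast
              show "x1 = w \<or> E w x1" using True Y(3) sym by blast
              fix a assume a: "a \<in> W" "a \<noteq> w"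
              show "\<not> (x1 = a \<or> E a x1)"
              proof (cases "a \<in> X - {x1, x2}")
                case True
                hence "a \<in> X - {x2}" "a \<noteq> x1" by auto
                thus ?thesis using Z2[OF _ x1Zm] by blast
              next
                case False
                hence "a = y2" using a W_def True by auto
                thus ?thesis using Z1[OF x1Z] Z(2) Y(1) by blast
              qed
            qed
          next
            case False
            hence wy2: "w = y2" using w2 by blast
            show ?thesis
            proof (intro exI[of _ x2] conjI ballI impI)
              show "x2 \<in> V" using Z(1) XV by blast
              show "x2 = w \<or> E w x2" using wy2 Z(3) sym by blast
              fix a assume a: "a \<in> W" "a \<noteq> w"
              show "\<not> (x2 = a \<or> E a x2)"
              proof (cases "a \<in> X - {x1, x2}")
                case True
                hence "a \<in> X - {x1}" "a \<noteq> x2" by auto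
                thus ?thesis using Y2[OF _ x2Ym] by blast
              next
                case False
                hence "a = y1" using a W_def wy2 by auto
                thus ?thesis using Y1[OF x2Y] Y(2) Z(1) by blast
              qed
            qed
          qed
        qed
      qed
      moreover have "card W = card X" unfolding W_def
        using card_swap2[OF finX Y(1) Z(1) x12 Y(2) Z(2) y12] .
      moreover have "y1 \<in> W" "y2 \<in> W" by (auto simp: W_def)
      ultimately show False using far[of W y1 y2] Y(2) Z(2) y12 by auto
    qed
  qed
qed

end

theorem proposition4p7:
  fixes VH :: "'a set" and EH :: "'a \<Rightarrow> 'a \<Rightarrow> bool"
  assumes "simple_graph VH EH"
    and "\<not> complete_graph VH EH"
    and "\<exists>w. universal_vertex VH EH w"
  shows "\<not> IR_graph_over TYPE('b) VH EH"
proof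
  assume "IR_graph_over TYPE('b) VH EH"
  then obtain VG :: "'b set" and EG where sgG: "simple_graph VG EG"
    and iso: "graph_iso VH EH (IR_sets VG EG) (IR_adj VG EG)"
    unfolding IR_graph_over_def by blast
  then obtain f where bij: "bij_betw f VH (IR_sets VG EG)"
    and hom: "\<forall>u\<in>VH. \<forall>v\<in>VH. EH u v \<longleftrightarrow> IR_adj VG EG (f u) (f v)"
    unfolding graph_iso_def by blast
  obtain w where w: "universal_vertex VH EH w" using assms(3) by blast
  obtain u v where uv: "u \<in> VH" "v \<in> VH" "u \<noteq> v" "\<not> EH u v"
    using assms(2) unfolding complete_graph_def by blast
  have symH: "\<And>a b. EH a b \<Longrightarrow> EH b a" using assms(1) by (simp add: simple_graph_def)
  have wV: "w \<in> VH" and wadj: "\<And>a. a \<in> VH \<Longrightarrow> a \<noteq> w \<Longrightarrow> EH w a"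
    using w by (auto simp: universal_vertex_def)
  have uw: "u \<noteq> w" using uv wadj by blast
  have vw: "v \<noteq> w" using uv wadj symH by blast
  have fIR: "\<And>a. a \<in> VH \<Longrightarrow> f a \<in> IR_sets VG EG" using bij bij_betwE by blast
  interpret UV VG EG "f w"
  proof
    show "simple_graph VG EG" by fact
    show "f w \<in> IR_sets VG EG" using fIR wV by blast
    fix W assume W: "W \<in> IR_sets VG EG" "W \<noteq> f w"
    then obtain a where a: "a \<in> VH" "W = f a" using bij unfolding bij_betw_def by blast
    hence "a \<noteq> w" using W by auto
    hence "EH w a" using wadj a by blast
    thus "IR_adj VG EG (f w) W" using hom wV a by blast
  qed
  show False
  proof (rule main[of "f u" "f v"])
    show "f u \<in> IR_sets VG EG" "f v \<in> IR_sets VG EG" using fIR uv by auto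
    show "f u \<noteq> f v" using bij uv unfolding bij_betw_def inj_on_def by blast
    show "IR_adj VG EG (f w) (f u)" using hom wV uv uw wadj by blast
    show "IR_adj VG EG (f w) (f v)" using hom wV uv vw wadj by blast
    show "\<not> IR_adj VG EG (f u) (f v)" using hom uv by blast
  qed
qed

end
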